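(* Let $A,B$ be unital $k$-algebras and $f:B\to A$ a unital algebra homomorphism. The modulation $A_f$ is an invertible morphism in $\mathsf{Alg}$ (i.e. a Morita equivalence between $A$ and $B$: there is a biunital $(B,A)$-bimodule $Y$ with $A_f\otimes_B Y\cong A$ as $(A,A)$-bimodules and $Y\otimes_A A_f\cong B$ as $(B,B)$-bimodules) if and only if $f$ is an algebra isomorphism.
   Context: $k$ is a commutative ring; all algebras are unital $k$-algebras. The category $\mathsf{Alg}$ has unital $k$-algebras as objects and, as morphisms to $A$ from $B$, isomorphism classes of biunital $(A,B)$-bimodules, composed by $X\otimes_B Y$. The modulation $A_f$ of a unital homomorphism $f:B\to A$ is the $k$-module $A$ with $(A,B)$-bimodule structure $a\cdot x\cdot b=a\,x\,f(b)$. *)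

theory Defs
  imports Main
begin

definition k_algebra :: "('k::comm_ring_1 \<Rightarrow> 'a::ring_1) \<Rightarrow> bool" where
  "k_algebra i \<longleftrightarrow> i 1 = 1 \<and> (\<forall>c d. i (c + d) = i c + i d) \<and>
     (\<forall>c d. i (c * d) = i c * i d) \<and> (\<forall>c a. i c * a = a * i c)"

definition alg_hom :: "('k::comm_ring_1 \<Rightarrow> 'a::ring_1) \<Rightarrow> ('k \<Rightarrow> 'b::ring_1) \<Rightarrow> ('b \<Rightarrow> 'a) \<Rightarrow> bool" where
  "alg_hom iA iB f \<longleftrightarrow> f 1 = 1 \<and> (\<forall>x y. f (x + y) = f x + f y) \<and>
     (\<forall>x y. f (x * y) = f x * f y) \<and> (\<forall>c. f (iB c) = iA c)"

definition alg_iso :: "('k::comm_ring_1 \<Rightarrow> 'a::ring_1) \<Rightarrow> ('k \<Rightarrow> 'b::ring_1) \<Rightarrow> ('b \<Rightarrow> 'a) \<Rightarrow> bool" where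
  "alg_iso iA iB f \<longleftrightarrow> alg_hom iA iB f \<and> bij f"

record ('a, 'b, 'x) bimod =
  bcar :: "'x set"
  badd :: "'x \<Rightarrow> 'x \<Rightarrow> 'x"
  bzero :: 'x
  bneg :: "'x \<Rightarrow> 'x"
  lact :: "'a \<Rightarrow> 'x \<Rightarrow> 'x"
  ract :: "'x \<Rightarrow> 'b \<Rightarrow> 'x"

text \<open>Biunital (A,B)-bimodule over k: the two induced k-actions agree.\<close>

definition is_bimod :: "('k::comm_ring_1 \<Rightarrow> 'a::ring_1) \<Rightarrow> ('k \<Rightarrow> 'b::ring_1) \<Rightarrow> ('a, 'b, 'x) bimod \<Rightarrow> bool" where
  "is_bimod iA iB M \<longleftrightarrow>
     bzero M \<in> bcar M \<and>
     (\<forall>x\<in>bcar M. \<forall>y\<in>bcar M. badd M x y \<in> bcar M) \<and>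
     (\<forall>x\<in>bcar M. bneg M x \<in> bcar M) \<and>
     (\<forall>x\<in>bcar M. \<forall>y\<in>bcar M. \<forall>z\<in>bcar M. badd M (badd M x y) z = badd M x (badd M y z)) \<and>
     (\<forall>x\<in>bcar M. \<forall>y\<in>bcar M. badd M x y = badd M y x) \<and>
     (\<forall>x\<in>bcar M. badd M (bzero M) x = x) \<and>
     (\<forall>x\<in>bcar M. badd M (bneg M x) x = bzero M) \<and>
     (\<forall>a. \<forall>x\<in>bcar M. lact M a x \<in> bcar M) \<and>
     (\<forall>b. \<forall>x\<in>bcar M. ract M x b \<in> bcar M) \<and>
     (\<forall>a. \<forall>x\<in>bcar M. \<forall>y\<in>bcar M. lact M a (badd M x y) = badd M (lact M a x) (lact M a y)) \<and>
     (\<forall>a a'. \<forall>x\<in>bcar M. lact M (a + a') x = badd M (lact M a x) (lact M a' x)) \<and>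
     (\<forall>a a'. \<forall>x\<in>bcar M. lact M (a * a') x = lact M a (lact M a' x)) \<and>
     (\<forall>x\<in>bcar M. lact M 1 x = x) \<and>
     (\<forall>b. \<forall>x\<in>bcar M. \<forall>y\<in>bcar M. ract M (badd M x y) b = badd M (ract M x b) (ract M y b)) \<and>
     (\<forall>b b'. \<forall>x\<in>bcar M. ract M x (b + b') = badd M (ract M x b) (ract M x b')) \<and>
     (\<forall>b b'. \<forall>x\<in>bcar M. ract M x (b * b') = ract M (ract M x b) b') \<and>
     (\<forall>x\<in>bcar M. ract M x 1 = x) \<and>
     (\<forall>a b. \<forall>x\<in>bcar M. lact M a (ract M x b) = ract M (lact M a x) b) \<and>
     (\<forall>c. \<forall>x\<in>bcar M. lact M (iA c) x = ract M x (iB c))"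

definition bimod_iso :: "('a, 'b, 'x) bimod \<Rightarrow> ('a, 'b, 'z) bimod \<Rightarrow> bool" where
  "bimod_iso M N \<longleftrightarrow> (\<exists>h. bij_betw h (bcar M) (bcar N) \<and>
     (\<forall>x\<in>bcar M. \<forall>y\<in>bcar M. h (badd M x y) = badd N (h x) (h y)) \<and>
     (\<forall>a. \<forall>x\<in>bcar M. h (lact M a x) = lact N a (h x)) \<and>
     (\<forall>b. \<forall>x\<in>bcar M. h (ract M x b) = ract N (h x) b))"

text \<open>The modulation A_f of f : B -> A, an (A,B)-bimodule; modulation id is the regular bimodule.\<close>

definition modulation :: "('b \<Rightarrow> 'a::ring_1) \<Rightarrow> ('a, 'b, 'a) bimod" where
  "modulation f = \<lparr>bcar = UNIV, badd = (+), bzero = 0, bneg = uminus,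
                   lact = (\<lambda>a x. a * x), ract = (\<lambda>x b. x * f b)\<rparr>"

text \<open>Tensor product X (x)_B Y: finitely supported integer formal sums on
carrier pairs, modulo the subgroup generated by biadditivity and B-balancing.\<close>

definition delta :: "'z \<Rightarrow> 'z \<Rightarrow> int" where
  "delta z = (\<lambda>p. if p = z then 1 else 0)"

definition push :: "('p \<Rightarrow> 'q) \<Rightarrow> ('p \<Rightarrow> int) \<Rightarrow> 'q \<Rightarrow> int" where
  "push g \<phi> = (\<lambda>q. \<Sum>p\<in>{p. \<phi> p \<noteq> 0 \<and> g p = q}. \<phi> p)"

inductive_set tens_rel :: "('a, 'b, 'x) bimod \<Rightarrow> ('b, 'c, 'y) bimod \<Rightarrow> ('x \<times> 'y \<Rightarrow> int) set"
  for X Y where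
  tr_zero: "(\<lambda>_. 0) \<in> tens_rel X Y"
| tr_addl: "\<lbrakk>x \<in> bcar X; x' \<in> bcar X; y \<in> bcar Y\<rbrakk> \<Longrightarrow>
     (\<lambda>p. delta (badd X x x', y) p - delta (x, y) p - delta (x', y) p) \<in> tens_rel X Y"
| tr_addr: "\<lbrakk>x \<in> bcar X; y \<in> bcar Y; y' \<in> bcar Y\<rbrakk> \<Longrightarrow>
     (\<lambda>p. delta (x, badd Y y y') p - delta (x, y) p - delta (x, y') p) \<in> tens_rel X Y"
| tr_bal: "\<lbrakk>x \<in> bcar X; y \<in> bcar Y\<rbrakk> \<Longrightarrow>
     (\<lambda>p. delta (ract X x b, y) p - delta (x, lact Y b y) p) \<in> tens_rel X Y"
| tr_diff: "\<lbrakk>\<phi> \<in> tens_rel X Y; \<psi> \<in> tens_rel X Y\<rbrakk> \<Longrightarrow> (\<lambda>p. \<phi> p - \<psi> p) \<in> tens_rel X Y"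

definition formal_sums :: "('a, 'b, 'x) bimod \<Rightarrow> ('b, 'c, 'y) bimod \<Rightarrow> ('x \<times> 'y \<Rightarrow> int) set" where
  "formal_sums X Y = {\<phi>. finite {p. \<phi> p \<noteq> 0} \<and> (\<forall>p. \<phi> p \<noteq> 0 \<longrightarrow> p \<in> bcar X \<times> bcar Y)}"

definition tcls :: "('a, 'b, 'x) bimod \<Rightarrow> ('b, 'c, 'y) bimod \<Rightarrow> ('x \<times> 'y \<Rightarrow> int) \<Rightarrow> ('x \<times> 'y \<Rightarrow> int) set" where
  "tcls X Y \<phi> = {\<psi>. (\<lambda>p. \<psi> p - \<phi> p) \<in> tens_rel X Y}"

definition tensor :: "('a, 'b, 'x) bimod \<Rightarrow> ('b, 'c, 'y) bimod \<Rightarrow> ('a, 'c, ('x \<times> 'y \<Rightarrow> int) set) bimod" where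
  "tensor X Y = \<lparr>
     bcar = tcls X Y ` formal_sums X Y,
     badd = (\<lambda>S T. \<Union>\<phi>\<in>S. \<Union>\<psi>\<in>T. tcls X Y (\<lambda>p. \<phi> p + \<psi> p)),
     bzero = tcls X Y (\<lambda>_. 0),
     bneg = (\<lambda>S. \<Union>\<phi>\<in>S. tcls X Y (\<lambda>p. - \<phi> p)),
     lact = (\<lambda>a S. \<Union>\<phi>\<in>S. tcls X Y (push (\<lambda>(x, y). (lact X a x, y)) \<phi>)),
     ract = (\<lambda>S c. \<Union>\<phi>\<in>S. tcls X Y (push (\<lambda>(x, y). (x, ract Y y c)) \<phi>))\<rparr>"

definition inverse_of_modulation ::
  "('k::comm_ring_1 \<Rightarrow> 'a::ring_1) \<Rightarrow> ('k \<Rightarrow> 'b::ring_1) \<Rightarrow> ('b \<Rightarrow> 'a) \<Rightarrow> ('b, 'a, 'y) bimod \<Rightarrow> bool" where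
  "inverse_of_modulation iA iB f Y \<longleftrightarrow> is_bimod iB iA Y \<and>
     bimod_iso (tensor (modulation f) Y) (modulation (id :: 'a \<Rightarrow> 'a)) \<and>
     bimod_iso (tensor Y (modulation f)) (modulation (id :: 'b \<Rightarrow> 'b))"

end

theory Submission
  imports Defs "HOL-Library.Function_Algebras"
begin

abbreviation spt :: "('z \<Rightarrow> int) \<Rightarrow> 'z set" where "spt \<phi> \<equiv> {p. \<phi> p \<noteq> 0}"

lemma delta_app: "delta z p = (if p = z then 1 else 0)" by (simp add: delta_def)

lemma spt_delta[simp]: "spt (delta z) = {z}" by (auto simp: delta_def)

lemma finite_delta_spt: "finite (spt (delta z))" by simp

lemma lam_diff: "(\<lambda>p. (f::'z\<Rightarrow>int) p - g p) = f - g" by (simp add: fun_diff_def)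

lemma rel_diff: "r \<in> tens_rel X Y \<Longrightarrow> s \<in> tens_rel X Y \<Longrightarrow> r - s \<in> tens_rel X Y"
  using tr_diff[of r X Y s] by (simp add: fun_diff_def)

lemma rel_zero: "0 \<in> tens_rel X Y"
  using tr_zero[of X Y] by (simp add: zero_fun_def)

lemma rel_uminus: "r \<in> tens_rel X Y \<Longrightarrow> - r \<in> tens_rel X Y"
  using rel_diff[OF rel_zero, of r] by simp

lemma rel_add: "r \<in> tens_rel X Y \<Longrightarrow> s \<in> tens_rel X Y \<Longrightarrow> r + s \<in> tens_rel X Y"
  using rel_diff[of r X Y "- s"] rel_uminus[of s X Y] by simp

lemma rel_addl: "x \<in> bcar X \<Longrightarrow> x' \<in> bcar X \<Longrightarrow> y \<in> bcar Y \<Longrightarrow>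
   delta (badd X x x', y) - delta (x, y) - delta (x', y) \<in> tens_rel X Y"
  using tr_addl[of x X x' y Y] by (simp add: fun_diff_def)

lemma rel_addr: "x \<in> bcar X \<Longrightarrow> y \<in> bcar Y \<Longrightarrow> y' \<in> bcar Y \<Longrightarrow>
   delta (x, badd Y y y') - delta (x, y) - delta (x, y') \<in> tens_rel X Y"
  using tr_addr[of x X y Y y'] by (simp add: fun_diff_def)

lemma rel_bal: "x \<in> bcar X \<Longrightarrow> y \<in> bcar Y \<Longrightarrow>
   delta (ract X x b, y) - delta (x, lact Y b y) \<in> tens_rel X Y"
  using tr_bal[of x X y Y b] by (simp add: fun_diff_def)

lemma spt_diff: "spt (\<lambda>p. (\<phi>::'z\<Rightarrow>int) p - \<psi> p) \<subseteq> spt \<phi> \<union> spt \<psi>" by auto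

lemma rel_fin: "r \<in> tens_rel X Y \<Longrightarrow> finite (spt r)"
proof (induction rule: tens_rel.induct)
  case tr_zero then show ?case by simp
next
  case (tr_addl x x' y)
  show ?case by (rule finite_subset[of _ "{(badd X x x', y), (x, y), (x', y)}"]) (auto simp: delta_def)
next
  case (tr_addr x y y')
  show ?case by (rule finite_subset[of _ "{(x, badd Y y y'), (x, y), (x, y')}"]) (auto simp: delta_def)
next
  case (tr_bal x y b)
  show ?case by (rule finite_subset[of _ "{(ract X x b, y), (x, lact Y b y)}"]) (auto simp: delta_def)
next
  case (tr_diff \<phi> \<psi>)
  then show ?case using spt_diff[of \<phi> \<psi>] by (meson finite_UnI finite_subset)
qed

lemma fin_add: "finite (spt (\<phi>::'z\<Rightarrow>int)) \<Longrightarrow> finite (spt \<psi>) \<Longrightarrow> finite (spt (\<phi> + \<psi>))"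
  by (rule finite_subset[of _ "spt \<phi> \<union> spt \<psi>"]) auto
lemma fin_diff: "finite (spt (\<phi>::'z\<Rightarrow>int)) \<Longrightarrow> finite (spt \<psi>) \<Longrightarrow> finite (spt (\<phi> - \<psi>))"
  by (rule finite_subset[of _ "spt \<phi> \<union> spt \<psi>"]) auto

lemma fs_induct_aux:
  fixes \<psi> :: "'z \<Rightarrow> int"
  assumes fin: "finite (spt \<psi>)" and Q0: "Q 0"
    and Qp: "\<And>\<phi> p. spt \<phi> \<subseteq> spt \<psi> \<Longrightarrow> p \<in> spt \<psi> \<Longrightarrow> Q \<phi> \<Longrightarrow> Q (\<phi> + delta p)"
    and Qm: "\<And>\<phi> p. spt \<phi> \<subseteq> spt \<psi> \<Longrightarrow> p \<in> spt \<psi> \<Longrightarrow> Q \<phi> \<Longrightarrow> Q (\<phi> - delta p)"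
  shows "\<forall>\<phi>. spt \<phi> \<subseteq> spt \<psi> \<longrightarrow> (\<Sum>p\<in>spt \<psi>. nat \<bar>\<phi> p\<bar>) = n \<longrightarrow> Q \<phi>"
proof (induction n)
  case 0
  show ?case
  proof (intro allI impI)
    fix \<phi> :: "'z \<Rightarrow> int" assume s: "spt \<phi> \<subseteq> spt \<psi>" and z: "(\<Sum>p\<in>spt \<psi>. nat \<bar>\<phi> p\<bar>) = 0"
    have "\<phi> = 0"
    proof
      fix p show "\<phi> p = 0 p"
      proof (cases "p \<in> spt \<psi>")
        case True
        then show ?thesis using z fin by (simp add: sum_eq_0_iff)
      next
        case False then show ?thesis using s by auto
      qed
    qed
    then show "Q \<phi>" using Q0 by simp
  qed
next
  case (Suc n)
  show ?case
  proof (intro allI impI)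
    fix \<phi> :: "'z \<Rightarrow> int" assume s: "spt \<phi> \<subseteq> spt \<psi>" and z: "(\<Sum>p\<in>spt \<psi>. nat \<bar>\<phi> p\<bar>) = Suc n"
    obtain p where p: "p \<in> spt \<psi>" "\<phi> p \<noteq> 0"
      using z by (metis (no_types, lifting) nat_0 abs_0 sum.neutral nat.distinct(1))
    show "Q \<phi>"
    proof (cases "\<phi> p > 0")
      case True
      define \<phi>' where "\<phi>' = \<phi> - delta p"
      have s': "spt \<phi>' \<subseteq> spt \<psi>" using s p by (auto simp: \<phi>'_def delta_def split: if_splits)
      have "(\<Sum>q\<in>spt \<psi>. nat \<bar>\<phi> q\<bar>) = nat \<bar>\<phi> p\<bar> + (\<Sum>q\<in>spt \<psi> - {p}. nat \<bar>\<phi> q\<bar>)"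
        using fin p(1) by (simp add: sum.remove)
      moreover have "(\<Sum>q\<in>spt \<psi>. nat \<bar>\<phi>' q\<bar>) = nat \<bar>\<phi>' p\<bar> + (\<Sum>q\<in>spt \<psi> - {p}. nat \<bar>\<phi>' q\<bar>)"
        using fin p(1) by (simp add: sum.remove)
      moreover have "(\<Sum>q\<in>spt \<psi> - {p}. nat \<bar>\<phi>' q\<bar>) = (\<Sum>q\<in>spt \<psi> - {p}. nat \<bar>\<phi> q\<bar>)"
        by (rule sum.cong) (auto simp: \<phi>'_def delta_def)
      moreover have "nat \<bar>\<phi>' p\<bar> + 1 = nat \<bar>\<phi> p\<bar>" using True by (simp add: \<phi>'_def delta_def)
      ultimately have "(\<Sum>q\<in>spt \<psi>. nat \<bar>\<phi>' q\<bar>) = n" using z by simp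
      then have "Q \<phi>'" using Suc.IH s' by blast
      then have "Q (\<phi>' + delta p)" using Qp s' p by blast
      then show ?thesis by (simp add: \<phi>'_def)
    next
      case False
      define \<phi>' where "\<phi>' = \<phi> + delta p"
      have s': "spt \<phi>' \<subseteq> spt \<psi>" using s p by (auto simp: \<phi>'_def delta_def split: if_splits)
      have "(\<Sum>q\<in>spt \<psi>. nat \<bar>\<phi> q\<bar>) = nat \<bar>\<phi> p\<bar> + (\<Sum>q\<in>spt \<psi> - {p}. nat \<bar>\<phi> q\<bar>)"
        using fin p(1) by (simp add: sum.remove)
      moreover have "(\<Sum>q\<in>spt \<psi>. nat \<bar>\<phi>' q\<bar>) = nat \<bar>\<phi>' p\<bar> + (\<Sum>q\<in>spt \<psi> - {p}. nat \<bar>\<phi>' q\<bar>)"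
        using fin p(1) by (simp add: sum.remove)
      moreover have "(\<Sum>q\<in>spt \<psi> - {p}. nat \<bar>\<phi>' q\<bar>) = (\<Sum>q\<in>spt \<psi> - {p}. nat \<bar>\<phi> q\<bar>)"
        by (rule sum.cong) (auto simp: \<phi>'_def delta_def)
      moreover have "nat \<bar>\<phi>' p\<bar> + 1 = nat \<bar>\<phi> p\<bar>" using False p(2) by (simp add: \<phi>'_def delta_def)
      ultimately have "(\<Sum>q\<in>spt \<psi>. nat \<bar>\<phi>' q\<bar>) = n" using z by simp
      then have "Q \<phi>'" using Suc.IH s' by blast
      then have "Q (\<phi>' - delta p)" using Qm s' p by blast
      then show ?thesis by (simp add: \<phi>'_def)
    qed
  qed
qed

lemma fs_induct:
  fixes \<psi> :: "'z \<Rightarrow> int"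
  assumes fin: "finite (spt \<psi>)" and Q0: "Q 0"
    and Qp: "\<And>\<phi> p. spt \<phi> \<subseteq> spt \<psi> \<Longrightarrow> p \<in> spt \<psi> \<Longrightarrow> Q \<phi> \<Longrightarrow> Q (\<phi> + delta p)"
    and Qm: "\<And>\<phi> p. spt \<phi> \<subseteq> spt \<psi> \<Longrightarrow> p \<in> spt \<psi> \<Longrightarrow> Q \<phi> \<Longrightarrow> Q (\<phi> - delta p)"
  shows "Q \<psi>"
  using fs_induct_aux[OF assms, of "\<Sum>p\<in>spt \<psi>. nat \<bar>\<psi> p\<bar>"] by blast


lemma fin_d2: "finite (spt (delta a - delta b))" by (rule fin_diff) auto
lemma fin_d3: "finite (spt (delta a - delta b - delta c))" by (rule fin_diff[OF fin_d2]) auto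


lemma push_eq: "finite F \<Longrightarrow> spt \<phi> \<subseteq> F \<Longrightarrow> push g \<phi> q = (\<Sum>p\<in>{p\<in>F. g p = q}. \<phi> p)"
  unfolding push_def by (rule sum.mono_neutral_left) auto

lemma push_add: "finite (spt \<phi>) \<Longrightarrow> finite (spt \<psi>) \<Longrightarrow> push g (\<phi> + \<psi>) = push g \<phi> + push g \<psi>"
proof
  fix q assume f: "finite (spt \<phi>)" "finite (spt \<psi>)"
  let ?F = "spt \<phi> \<union> spt \<psi>"
  have "push g (\<phi> + \<psi>) q = (\<Sum>p\<in>{p\<in>?F. g p = q}. (\<phi> + \<psi>) p)" using f by (intro push_eq) auto
  also have "\<dots> = (\<Sum>p\<in>{p\<in>?F. g p = q}. \<phi> p) + (\<Sum>p\<in>{p\<in>?F. g p = q}. \<psi> p)" by (simp add: sum.distrib)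
  also have "\<dots> = push g \<phi> q + push g \<psi> q" using f push_eq[of ?F \<phi> g q] push_eq[of ?F \<psi> g q] by simp
  finally show "push g (\<phi> + \<psi>) q = (push g \<phi> + push g \<psi>) q" by simp
qed

lemma push_diff: "finite (spt \<phi>) \<Longrightarrow> finite (spt \<psi>) \<Longrightarrow> push g (\<phi> - \<psi>) = push g \<phi> - push g \<psi>"
proof
  fix q assume f: "finite (spt \<phi>)" "finite (spt \<psi>)"
  let ?F = "spt \<phi> \<union> spt \<psi>"
  have "push g (\<phi> - \<psi>) q = (\<Sum>p\<in>{p\<in>?F. g p = q}. (\<phi> - \<psi>) p)" using f by (intro push_eq) auto
  also have "\<dots> = (\<Sum>p\<in>{p\<in>?F. g p = q}. \<phi> p) - (\<Sum>p\<in>{p\<in>?F. g p = q}. \<psi> p)" by (simp add: sum_subtractf)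
  also have "\<dots> = push g \<phi> q - push g \<psi> q" using f push_eq[of ?F \<phi> g q] push_eq[of ?F \<psi> g q] by simp
  finally show "push g (\<phi> - \<psi>) q = (push g \<phi> - push g \<psi>) q" by simp
qed

lemma push_zero[simp]: "push g 0 = 0"
  by (rule ext) (simp add: push_def)

lemma push_delta[simp]: "push g (delta z) = delta (g z)"
proof
  fix q
  have e: "{p\<in>{z}. g p = q} = (if g z = q then {z} else {})" by auto
  have "push g (delta z) q = (\<Sum>p\<in>{p\<in>{z}. g p = q}. delta z p)" by (rule push_eq) auto
  also have "\<dots> = delta (g z) q" unfolding e by (simp add: delta_def)
  finally show "push g (delta z) q = delta (g z) q" .
qed

lemma push_spt: "spt (push g \<phi>) \<subseteq> g ` spt \<phi>"
proof
  fix q assume q: "q \<in> spt (push g \<phi>)"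
  show "q \<in> g ` spt \<phi>"
  proof (rule ccontr)
    assume "q \<notin> g ` spt \<phi>"
    then have e: "{p. \<phi> p \<noteq> 0 \<and> g p = q} = {}" by auto
    have "push g \<phi> q = 0" unfolding push_def e by simp
    then show False using q by simp
  qed
qed

lemma push_fin: "finite (spt \<phi>) \<Longrightarrow> finite (spt (push g \<phi>))"
  using push_spt[of g \<phi>] by (meson finite_imageI finite_subset)

lemma push_comp:
  assumes f0: "finite (spt \<psi>)" shows "push g (push g' \<psi>) = push (g \<circ> g') \<psi>"
proof (rule fs_induct[OF f0, where Q = "\<lambda>\<phi>. push g (push g' \<phi>) = push (g \<circ> g') \<phi>"])
  show "push g (push g' 0) = push (g \<circ> g') 0" by simp
next
  fix \<phi> p assume a: "spt \<phi> \<subseteq> spt \<psi>" "push g (push g' \<phi>) = push (g \<circ> g') \<phi>"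
  have f: "finite (spt \<phi>)" using a f0 finite_subset by blast
  show "push g (push g' (\<phi> + delta p)) = push (g \<circ> g') (\<phi> + delta p)"
    using a f by (simp add: push_add push_fin)
  show "push g (push g' (\<phi> - delta p)) = push (g \<circ> g') (\<phi> - delta p)"
    using a f by (simp add: push_diff push_fin)
qed

lemma push_d2: "push g (delta a - delta b) = delta (g a) - delta (g b)"
proof -
  have "push g (delta a - delta b) = push g (delta a) - push g (delta b)" by (rule push_diff) auto
  then show ?thesis by (simp only: push_delta)
qed
lemma push_d3: "push g (delta a - delta b - delta c) = delta (g a) - delta (g b) - delta (g c)"
proof -
  have "push g (delta a - delta b - delta c) = push g (delta a - delta b) - push g (delta c)"
    by (rule push_diff[OF fin_d2]) auto
  then show ?thesis by (simp only: push_delta push_d2)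
qed

lemma push_rel:
  assumes gxc: "\<And>x. x \<in> bcar X \<Longrightarrow> gx x \<in> bcar X"
    and gxa: "\<And>x x'. x \<in> bcar X \<Longrightarrow> x' \<in> bcar X \<Longrightarrow> gx (badd X x x') = badd X (gx x) (gx x')"
    and gxr: "\<And>x b. x \<in> bcar X \<Longrightarrow> gx (ract X x b) = ract X (gx x) b"
    and gyc: "\<And>y. y \<in> bcar Y \<Longrightarrow> gy y \<in> bcar Y"
    and gya: "\<And>y y'. y \<in> bcar Y \<Longrightarrow> y' \<in> bcar Y \<Longrightarrow> gy (badd Y y y') = badd Y (gy y) (gy y')"
    and gyl: "\<And>y b. y \<in> bcar Y \<Longrightarrow> gy (lact Y b y) = lact Y b (gy y)"
  shows "r \<in> tens_rel X Y \<Longrightarrow> push (\<lambda>(x, y). (gx x, gy y)) r \<in> tens_rel X Y"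
proof (induction rule: tens_rel.induct)
  case tr_zero then show ?case using rel_zero by (simp add: zero_fun_def[symmetric])
next
  case (tr_addl x x' y)
  have e: "(\<lambda>p. delta (badd X x x', y) p - delta (x, y) p - delta (x', y) p) = delta (badd X x x', y) - delta (x, y) - delta (x', y)"
    by (simp add: fun_diff_def)
  show ?case unfolding e push_d3 using rel_addl[OF gxc[OF tr_addl(1)] gxc[OF tr_addl(2)] gyc[OF tr_addl(3)]]
    by (simp only: split gxa[OF tr_addl(1,2)])
next
  case (tr_addr x y y')
  have e: "(\<lambda>p. delta (x, badd Y y y') p - delta (x, y) p - delta (x, y') p) = delta (x, badd Y y y') - delta (x, y) - delta (x, y')"
    by (simp add: fun_diff_def)
  show ?case unfolding e push_d3 using rel_addr[OF gxc[OF tr_addr(1)] gyc[OF tr_addr(2)] gyc[OF tr_addr(3)]]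
    by (simp only: split gya[OF tr_addr(2,3)])
next
  case (tr_bal x y b)
  have e: "(\<lambda>p. delta (ract X x b, y) p - delta (x, lact Y b y) p) = delta (ract X x b, y) - delta (x, lact Y b y)"
    by (simp add: fun_diff_def)
  show ?case unfolding e push_d2 using rel_bal[OF gxc[OF tr_bal(1)] gyc[OF tr_bal(2)], of b]
    by (simp only: split gxr[OF tr_bal(1)] gyl[OF tr_bal(2)])
next
  case (tr_diff \<phi> \<psi>)
  show ?case unfolding lam_diff[of \<phi> \<psi>] push_diff[OF rel_fin[OF tr_diff(1)] rel_fin[OF tr_diff(2)]]
    by (rule rel_diff[OF tr_diff(3,4)])
qed


lemma tcls_iff: "\<psi> \<in> tcls X Y \<phi> \<longleftrightarrow> \<psi> - \<phi> \<in> tens_rel X Y"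
  unfolding tcls_def by (simp add: fun_diff_def)

lemma tcls_self: "\<phi> \<in> tcls X Y \<phi>"
  by (simp add: tcls_iff rel_zero)

lemma tcls_eq: "tcls X Y \<phi> = tcls X Y \<psi> \<longleftrightarrow> \<phi> - \<psi> \<in> tens_rel X Y"
proof
  assume "tcls X Y \<phi> = tcls X Y \<psi>"
  then show "\<phi> - \<psi> \<in> tens_rel X Y" using tcls_self[of \<phi> X Y] by (simp add: tcls_iff)
next
  assume a: "\<phi> - \<psi> \<in> tens_rel X Y"
  show "tcls X Y \<phi> = tcls X Y \<psi>"
  proof (rule set_eqI)
    fix \<theta>
    have "\<theta> - \<psi> = (\<theta> - \<phi>) + (\<phi> - \<psi>)" "\<theta> - \<phi> = (\<theta> - \<psi>) - (\<phi> - \<psi>)" by simp_all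
    then show "\<theta> \<in> tcls X Y \<phi> \<longleftrightarrow> \<theta> \<in> tcls X Y \<psi>" unfolding tcls_iff
      using a rel_add rel_diff by metis
  qed
qed

lemma tcls_fin: "\<psi> \<in> tcls X Y \<phi> \<Longrightarrow> finite (spt \<phi>) \<Longrightarrow> finite (spt \<psi>)"
proof -
  assume a: "\<psi> \<in> tcls X Y \<phi>" "finite (spt \<phi>)"
  have "\<psi> = (\<psi> - \<phi>) + \<phi>" by simp
  then show ?thesis using a rel_fin[of "\<psi> - \<phi>"] fin_add tcls_iff by metis
qed

lemma Union_const: "a \<in> A \<Longrightarrow> (\<And>x. x \<in> A \<Longrightarrow> F x = C) \<Longrightarrow> (\<Union>x\<in>A. F x) = C" by auto

lemma tensor_carrier: "bcar (tensor X Y) = tcls X Y ` formal_sums X Y"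
  by (simp add: tensor_def)

lemma tensor_bzero: "bzero (tensor X Y) = tcls X Y 0"
  by (simp add: tensor_def zero_fun_def)

lemma tensor_badd: "badd (tensor X Y) (tcls X Y \<phi>) (tcls X Y \<psi>) = tcls X Y (\<phi> + \<psi>)"
proof -
  have "badd (tensor X Y) (tcls X Y \<phi>) (tcls X Y \<psi>) = (\<Union>\<phi>'\<in>tcls X Y \<phi>. \<Union>\<psi>'\<in>tcls X Y \<psi>. tcls X Y (\<phi>' + \<psi>'))"
    by (simp add: tensor_def plus_fun_def)
  also have "\<dots> = tcls X Y (\<phi> + \<psi>)"
  proof (rule Union_const[OF tcls_self], rule Union_const[OF tcls_self])
    fix \<phi>' \<psi>' assume "\<phi>' \<in> tcls X Y \<phi>" "\<psi>' \<in> tcls X Y \<psi>"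
    then have "\<phi>' - \<phi> \<in> tens_rel X Y" "\<psi>' - \<psi> \<in> tens_rel X Y" by (simp_all add: tcls_iff)
    moreover have "(\<phi>' + \<psi>') - (\<phi> + \<psi>) = (\<phi>' - \<phi>) + (\<psi>' - \<psi>)" by simp
    ultimately show "tcls X Y (\<phi>' + \<psi>') = tcls X Y (\<phi> + \<psi>)" unfolding tcls_eq by (metis rel_add)
  qed
  finally show ?thesis .
qed

lemma tensor_lact:
  assumes bm: "is_bimod iX iZ X" and f: "finite (spt \<phi>)"
  shows "lact (tensor X Y) a (tcls X Y \<phi>) = tcls X Y (push (\<lambda>(x, y). (lact X a x, y)) \<phi>)"
proof -
  have "lact (tensor X Y) a (tcls X Y \<phi>) = (\<Union>\<phi>'\<in>tcls X Y \<phi>. tcls X Y (push (\<lambda>(x, y). (lact X a x, y)) \<phi>'))"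
    by (simp add: tensor_def)
  also have "\<dots> = tcls X Y (push (\<lambda>(x, y). (lact X a x, y)) \<phi>)"
  proof (rule Union_const[OF tcls_self])
    fix \<phi>' assume a: "\<phi>' \<in> tcls X Y \<phi>"
    then have r: "\<phi>' - \<phi> \<in> tens_rel X Y" by (simp add: tcls_iff)
    have f': "finite (spt \<phi>')" using tcls_fin[OF a f] .
    have "push (\<lambda>(x, y). (lact X a x, (\<lambda>y. y) y)) (\<phi>' - \<phi>) \<in> tens_rel X Y"
      by (rule push_rel[OF _ _ _ _ _ _ r]) (use bm in \<open>auto simp: is_bimod_def\<close>)
    then show "tcls X Y (push (\<lambda>(x, y). (lact X a x, y)) \<phi>') = tcls X Y (push (\<lambda>(x, y). (lact X a x, y)) \<phi>)"
      unfolding tcls_eq by (simp add: push_diff[OF f' f])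
  qed
  finally show ?thesis .
qed

lemma tensor_ract:
  assumes bm: "is_bimod iZ iY Y" and f: "finite (spt \<phi>)"
  shows "ract (tensor X Y) (tcls X Y \<phi>) c = tcls X Y (push (\<lambda>(x, y). (x, ract Y y c)) \<phi>)"
proof -
  have "ract (tensor X Y) (tcls X Y \<phi>) c = (\<Union>\<phi>'\<in>tcls X Y \<phi>. tcls X Y (push (\<lambda>(x, y). (x, ract Y y c)) \<phi>'))"
    by (simp add: tensor_def)
  also have "\<dots> = tcls X Y (push (\<lambda>(x, y). (x, ract Y y c)) \<phi>)"
  proof (rule Union_const[OF tcls_self])
    fix \<phi>' assume a: "\<phi>' \<in> tcls X Y \<phi>"
    then have r: "\<phi>' - \<phi> \<in> tens_rel X Y" by (simp add: tcls_iff)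
    have f': "finite (spt \<phi>')" using tcls_fin[OF a f] .
    have "push (\<lambda>(x, y). ((\<lambda>x. x) x, ract Y y c)) (\<phi>' - \<phi>) \<in> tens_rel X Y"
      by (rule push_rel[OF _ _ _ _ _ _ r]) (use bm in \<open>auto simp: is_bimod_def\<close>)
    then show "tcls X Y (push (\<lambda>(x, y). (x, ract Y y c)) \<phi>') = tcls X Y (push (\<lambda>(x, y). (x, ract Y y c)) \<phi>)"
      unfolding tcls_eq by (simp add: push_diff[OF f' f])
  qed
  finally show ?thesis .
qed

section \<open>Linear functionals\<close>

definition lin :: "('z \<Rightarrow> 'r::ring_1) \<Rightarrow> ('z \<Rightarrow> int) \<Rightarrow> 'r" where
  "lin \<mu> \<phi> = (\<Sum>p\<in>spt \<phi>. of_int (\<phi> p) * \<mu> p)"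

lemma lin_eq: "finite F \<Longrightarrow> spt \<phi> \<subseteq> F \<Longrightarrow> lin \<mu> \<phi> = (\<Sum>p\<in>F. of_int (\<phi> p) * \<mu> p)"
  unfolding lin_def by (rule sum.mono_neutral_left) auto

lemma lin_add: "finite (spt \<phi>) \<Longrightarrow> finite (spt \<psi>) \<Longrightarrow> lin \<mu> (\<phi> + \<psi>) = lin \<mu> \<phi> + lin \<mu> \<psi>"
proof -
  assume f: "finite (spt \<phi>)" "finite (spt \<psi>)"
  let ?F = "spt \<phi> \<union> spt \<psi>"
  have "lin \<mu> (\<phi> + \<psi>) = (\<Sum>p\<in>?F. of_int ((\<phi> + \<psi>) p) * \<mu> p)" using f by (intro lin_eq) auto
  also have "\<dots> = (\<Sum>p\<in>?F. of_int (\<phi> p) * \<mu> p) + (\<Sum>p\<in>?F. of_int (\<psi> p) * \<mu> p)"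
    by (simp add: sum.distrib distrib_right)
  also have "\<dots> = lin \<mu> \<phi> + lin \<mu> \<psi>" using f lin_eq[of ?F \<phi> \<mu>] lin_eq[of ?F \<psi> \<mu>] by simp
  finally show ?thesis .
qed

lemma lin_diff: "finite (spt \<phi>) \<Longrightarrow> finite (spt \<psi>) \<Longrightarrow> lin \<mu> (\<phi> - \<psi>) = lin \<mu> \<phi> - lin \<mu> \<psi>"
proof -
  assume f: "finite (spt \<phi>)" "finite (spt \<psi>)"
  let ?F = "spt \<phi> \<union> spt \<psi>"
  have "lin \<mu> (\<phi> - \<psi>) = (\<Sum>p\<in>?F. of_int ((\<phi> - \<psi>) p) * \<mu> p)" using f by (intro lin_eq) auto
  also have "\<dots> = (\<Sum>p\<in>?F. of_int (\<phi> p) * \<mu> p) - (\<Sum>p\<in>?F. of_int (\<psi> p) * \<mu> p)"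
    by (simp add: sum_subtractf left_diff_distrib)
  also have "\<dots> = lin \<mu> \<phi> - lin \<mu> \<psi>" using f lin_eq[of ?F \<phi> \<mu>] lin_eq[of ?F \<psi> \<mu>] by simp
  finally show ?thesis .
qed

lemma lin_zero[simp]: "lin \<mu> 0 = 0" by (simp add: lin_def)

lemma lin_delta[simp]: "lin \<mu> (delta z) = \<mu> z" by (simp add: lin_def delta_def)

lemma lin_d2: "lin \<mu> (delta a - delta b) = \<mu> a - \<mu> b"
  by (simp only: lin_diff[of "delta a" "delta b"] spt_delta finite.intros lin_delta)
  
lemma lin_d3: "lin \<mu> (delta a - delta b - delta c) = \<mu> a - \<mu> b - \<mu> c"
  by (simp only: lin_diff[OF fin_d2, of "delta c"] lin_d2 spt_delta finite.intros lin_delta)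

lemma lin_push:
  assumes f0: "finite (spt \<psi>)" shows "lin \<mu> (push g \<psi>) = lin (\<lambda>p. \<mu> (g p)) \<psi>"
proof (rule fs_induct[OF f0, where Q = "\<lambda>\<phi>. lin \<mu> (push g \<phi>) = lin (\<lambda>p. \<mu> (g p)) \<phi>"])
  show "lin \<mu> (push g 0) = lin (\<lambda>p. \<mu> (g p)) 0" by simp
next
  fix \<phi> p assume a: "spt \<phi> \<subseteq> spt \<psi>" "lin \<mu> (push g \<phi>) = lin (\<lambda>p. \<mu> (g p)) \<phi>"
  have f: "finite (spt \<phi>)" using a f0 finite_subset by blast
  show "lin \<mu> (push g (\<phi> + delta p)) = lin (\<lambda>p. \<mu> (g p)) (\<phi> + delta p)"
    using a f by (simp add: push_add push_fin lin_add)
  show "lin \<mu> (push g (\<phi> - delta p)) = lin (\<lambda>p. \<mu> (g p)) (\<phi> - delta p)"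
    using a f by (simp add: push_diff push_fin lin_diff)
qed

lemma lin_rel:
  fixes \<mu> :: "'x \<times> 'y \<Rightarrow> 'r::ring_1"
  assumes ml: "\<And>x x' y. x \<in> bcar X \<Longrightarrow> x' \<in> bcar X \<Longrightarrow> y \<in> bcar Y \<Longrightarrow> \<mu> (badd X x x', y) = \<mu> (x, y) + \<mu> (x', y)"
    and mr: "\<And>x y y'. x \<in> bcar X \<Longrightarrow> y \<in> bcar Y \<Longrightarrow> y' \<in> bcar Y \<Longrightarrow> \<mu> (x, badd Y y y') = \<mu> (x, y) + \<mu> (x, y')"
    and mb: "\<And>x y b. x \<in> bcar X \<Longrightarrow> y \<in> bcar Y \<Longrightarrow> \<mu> (ract X x b, y) = \<mu> (x, lact Y b y)"
  shows "r \<in> tens_rel X Y \<Longrightarrow> lin \<mu> r = 0"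
proof (induction rule: tens_rel.induct)
  case tr_zero then show ?case by (simp add: zero_fun_def[symmetric])
next
  case (tr_addl x x' y)
  show ?case unfolding lam_diff[of "\<lambda>p. delta (badd X x x', y) p - delta (x, y) p" "delta (x', y)"]
    lam_diff[of "delta (badd X x x', y)" "delta (x, y)"] lin_d3 using ml[OF tr_addl] by simp
next
  case (tr_addr x y y')
  show ?case unfolding lam_diff[of "\<lambda>p. delta (x, badd Y y y') p - delta (x, y) p" "delta (x, y')"]
    lam_diff[of "delta (x, badd Y y y')" "delta (x, y)"] lin_d3 using mr[OF tr_addr] by simp
next
  case (tr_bal x y b)
  show ?case unfolding lam_diff[of "delta (ract X x b, y)" "delta (x, lact Y b y)"] lin_d2
    using mb[OF tr_bal] by simp
next
  case (tr_diff \<phi> \<psi>)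
  show ?case unfolding lam_diff[of \<phi> \<psi>] lin_diff[OF rel_fin[OF tr_diff(1)] rel_fin[OF tr_diff(2)]]
    using tr_diff(3,4) by simp
qed


lemma lin_cong: "(\<And>p. \<phi> p \<noteq> 0 \<Longrightarrow> \<mu> p = \<nu> p) \<Longrightarrow> lin \<mu> \<phi> = lin \<nu> \<phi>"
  unfolding lin_def by (rule sum.cong) auto

lemma of_int_mult_left: "of_int n * (a * m) = a * (of_int n * (m::'r::ring_1))"
  by (metis mult.assoc mult_of_int_commute)

lemma lin_lmult: "lin (\<lambda>p. a * \<mu> p) \<phi> = a * lin \<mu> \<phi>"
  unfolding lin_def sum_distrib_left by (rule sum.cong) (simp_all only: of_int_mult_left)

lemma lin_rmult: "lin (\<lambda>p. \<mu> p * c) \<phi> = lin \<mu> \<phi> * c"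
  unfolding lin_def sum_distrib_right by (rule sum.cong) (auto simp: mult.assoc)

lemma mod_simps[simp]:
  "bcar (modulation f) = UNIV" "badd (modulation f) = (+)" "bzero (modulation f) = 0"
  "bneg (modulation f) = uminus" "lact (modulation f) a x = a * x" "ract (modulation f) x b = x * f b"
  by (simp_all add: modulation_def)

lemma formal_fin: "\<phi> \<in> formal_sums X Y \<Longrightarrow> finite (spt \<phi>)"
  by (simp add: formal_sums_def)

lemma formal_car: "\<phi> \<in> formal_sums X Y \<Longrightarrow> \<phi> p \<noteq> 0 \<Longrightarrow> fst p \<in> bcar X \<and> snd p \<in> bcar Y"
  by (cases p) (auto simp: formal_sums_def)

lemma formal_sub: "\<psi> \<in> formal_sums X Y \<Longrightarrow> spt \<phi> \<subseteq> spt \<psi> \<Longrightarrow> \<phi> \<in> formal_sums X Y"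
  unfolding formal_sums_def by (auto intro: finite_subset)

lemma formal_delta: "x \<in> bcar X \<Longrightarrow> y \<in> bcar Y \<Longrightarrow> delta (x, y) \<in> formal_sums X Y"
  unfolding formal_sums_def by (auto simp: delta_def)

section \<open>A criterion for a tensor product to be isomorphic to a regular bimodule\<close>

lemma tensor_iso_ring:
  fixes X :: "('r::ring_1, 'b::ring_1, 'x) bimod" and Y :: "('b, 'r, 'y) bimod" and \<mu> :: "'x \<times> 'y \<Rightarrow> 'r"
  assumes bX: "is_bimod iR iB X" and bY: "is_bimod iB iR Y"
    and ml: "\<And>x x' y. x \<in> bcar X \<Longrightarrow> x' \<in> bcar X \<Longrightarrow> y \<in> bcar Y \<Longrightarrow> \<mu> (badd X x x', y) = \<mu> (x, y) + \<mu> (x', y)"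
    and mr: "\<And>x y y'. x \<in> bcar X \<Longrightarrow> y \<in> bcar Y \<Longrightarrow> y' \<in> bcar Y \<Longrightarrow> \<mu> (x, badd Y y y') = \<mu> (x, y) + \<mu> (x, y')"
    and mb: "\<And>x y b. x \<in> bcar X \<Longrightarrow> y \<in> bcar Y \<Longrightarrow> \<mu> (ract X x b, y) = \<mu> (x, lact Y b y)"
    and mL: "\<And>a x y. x \<in> bcar X \<Longrightarrow> y \<in> bcar Y \<Longrightarrow> \<mu> (lact X a x, y) = a * \<mu> (x, y)"
    and mR: "\<And>c x y. x \<in> bcar X \<Longrightarrow> y \<in> bcar Y \<Longrightarrow> \<mu> (x, ract Y y c) = \<mu> (x, y) * c"
    and sc: "\<And>m. \<sigma> m \<in> bcar X" and yone: "yone \<in> bcar Y" and s\<mu>: "\<And>m. \<mu> (\<sigma> m, yone) = m"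
    and sadd: "\<And>m m'. \<sigma> (m + m') = badd X (\<sigma> m) (\<sigma> m')"
    and red: "\<And>x y. x \<in> bcar X \<Longrightarrow> y \<in> bcar Y \<Longrightarrow> delta (x, y) - delta (\<sigma> (\<mu> (x, y)), yone) \<in> tens_rel X Y"
  shows "bimod_iso (tensor X Y) (modulation (id :: 'r \<Rightarrow> 'r))"
proof -
  define R where "R m = delta (\<sigma> m, yone)" for m
  have Radd: "R (m + m') - R m - R m' \<in> tens_rel X Y" for m m'
    unfolding R_def sadd using rel_addl[OF sc sc yone] .
  have R0: "R 0 \<in> tens_rel X Y"
  proof -
    have "- (R (0 + 0) - R 0 - R 0) = R 0" by simp
    then show ?thesis using rel_uminus[OF Radd[of 0 0]] by simp
  qed
  have Radd': "R m + R m' - R (m + m') \<in> tens_rel X Y" for m m'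
  proof -
    have "- (R (m + m') - R m - R m') = R m + R m' - R (m + m')" by (simp add: algebra_simps)
    then show ?thesis using rel_uminus[OF Radd[of m m']] by metis
  qed
  have Rdiff: "R m - R m' - R (m - m') \<in> tens_rel X Y" for m m'
  proof -
    have "R ((m - m') + m') - R (m - m') - R m' = R m - R m' - R (m - m')" by (simp add: algebra_simps)
    then show ?thesis using Radd[of "m - m'" m'] by metis
  qed
  have lin0: "lin \<mu> r = 0" if "r \<in> tens_rel X Y" for r
    by (rule lin_rel[OF ml mr mb that])
  have redR: "\<phi> - R (lin \<mu> \<phi>) \<in> tens_rel X Y" if \<phi>f: "\<phi> \<in> formal_sums X Y" for \<phi>
  proof (rule fs_induct[OF formal_fin[OF \<phi>f], where Q = "\<lambda>\<phi>. \<phi> - R (lin \<mu> \<phi>) \<in> tens_rel X Y"])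
    show "0 - R (lin \<mu> 0) \<in> tens_rel X Y" using rel_uminus[OF R0] by simp
  next
    fix \<chi> p assume a: "spt \<chi> \<subseteq> spt \<phi>" "p \<in> spt \<phi>" "\<chi> - R (lin \<mu> \<chi>) \<in> tens_rel X Y"
    have fc: "finite (spt \<chi>)" using a(1) formal_fin[OF \<phi>f] finite_subset by blast
    obtain x y where p: "p = (x, y)" by force
    have xy: "x \<in> bcar X" "y \<in> bcar Y" using formal_car[OF \<phi>f, of p] a(2) p by auto
    have rd: "delta p - R (\<mu> p) \<in> tens_rel X Y" unfolding p R_def by (rule red[OF xy])
    have e1: "(\<chi> + delta p) - R (lin \<mu> \<chi> + \<mu> p) = (\<chi> - R (lin \<mu> \<chi>)) + (delta p - R (\<mu> p)) + (R (lin \<mu> \<chi>) + R (\<mu> p) - R (lin \<mu> \<chi> + \<mu> p))"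
      by (simp add: algebra_simps)
    have ll: "lin \<mu> (\<chi> + delta p) = lin \<mu> \<chi> + \<mu> p" using lin_add[OF fc, of "delta p" \<mu>] by simp
    show "(\<chi> + delta p) - R (lin \<mu> (\<chi> + delta p)) \<in> tens_rel X Y"
      unfolding ll e1 by (rule rel_add[OF rel_add[OF a(3) rd] Radd'])
    have e2: "(\<chi> - delta p) - R (lin \<mu> \<chi> - \<mu> p) = (\<chi> - R (lin \<mu> \<chi>)) - (delta p - R (\<mu> p)) + (R (lin \<mu> \<chi>) - R (\<mu> p) - R (lin \<mu> \<chi> - \<mu> p))"
      by (simp add: algebra_simps)
    have ld: "lin \<mu> (\<chi> - delta p) = lin \<mu> \<chi> - \<mu> p" using lin_diff[OF fc, of "delta p" \<mu>] by simp
    show "(\<chi> - delta p) - R (lin \<mu> (\<chi> - delta p)) \<in> tens_rel X Y"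
      unfolding ld e2 by (rule rel_add[OF rel_diff[OF a(3) rd] Rdiff])
  qed
  define h where "h S = lin \<mu> (SOME \<phi>. \<phi> \<in> S)" for S
  have hcls: "h (tcls X Y \<phi>) = lin \<mu> \<phi>" if f: "finite (spt \<phi>)" for \<phi>
  proof -
    let ?\<psi> = "SOME \<psi>. \<psi> \<in> tcls X Y \<phi>"
    have m: "?\<psi> \<in> tcls X Y \<phi>" by (rule someI[of "\<lambda>\<psi>. \<psi> \<in> tcls X Y \<phi>", OF tcls_self])
    then have r: "?\<psi> - \<phi> \<in> tens_rel X Y" by (simp add: tcls_iff)
    have "lin \<mu> ?\<psi> - lin \<mu> \<phi> = 0" using lin_diff[OF tcls_fin[OF m f] f, of \<mu>] lin0[OF r] by simp
    then show ?thesis unfolding h_def by simp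
  qed
  have car: "bcar (tensor X Y) = tcls X Y ` formal_sums X Y" by (rule tensor_carrier)
  show ?thesis unfolding bimod_iso_def
  proof (intro exI[of _ h] conjI ballI allI)
    show "bij_betw h (bcar (tensor X Y)) (bcar (modulation id))"
      unfolding bij_betw_def car
    proof
      show "inj_on h (tcls X Y ` formal_sums X Y)"
      proof (rule inj_onI, elim imageE)
        fix S T \<phi> \<psi> assume e: "h S = h T" "S = tcls X Y \<phi>" "\<phi> \<in> formal_sums X Y" "T = tcls X Y \<psi>" "\<psi> \<in> formal_sums X Y"
        have l: "lin \<mu> \<phi> = lin \<mu> \<psi>" using e(1) unfolding e(2,4) hcls[OF formal_fin[OF e(3)]] hcls[OF formal_fin[OF e(5)]] .
        have eq: "\<phi> - \<psi> = (\<phi> - R (lin \<mu> \<phi>)) - (\<psi> - R (lin \<mu> \<psi>))" using l by simp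
        have "\<phi> - \<psi> \<in> tens_rel X Y" by (subst eq) (rule rel_diff[OF redR[OF e(3)] redR[OF e(5)]])
        then show "S = T" unfolding e(2,4) tcls_eq .
      qed
      show "h ` tcls X Y ` formal_sums X Y = bcar (modulation id)"
      proof -
        have "m \<in> h ` tcls X Y ` formal_sums X Y" for m :: 'r
        proof -
        have "R m \<in> formal_sums X Y" unfolding R_def by (rule formal_delta[OF sc yone])
        moreover have "h (tcls X Y (R m)) = m" using hcls[of "R m"] by (simp add: R_def s\<mu>)
        ultimately show "m \<in> h ` tcls X Y ` formal_sums X Y" by (metis image_eqI imageI)
        qed
        then show ?thesis by auto
      qed
    qed
  next
    fix S T assume "S \<in> bcar (tensor X Y)" "T \<in> bcar (tensor X Y)"
    then obtain \<phi> \<psi> where e: "S = tcls X Y \<phi>" "\<phi> \<in> formal_sums X Y" "T = tcls X Y \<psi>" "\<psi> \<in> formal_sums X Y"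
      unfolding car by blast
    have f: "finite (spt \<phi>)" "finite (spt \<psi>)" using e formal_fin by auto
    show "h (badd (tensor X Y) S T) = badd (modulation id) (h S) (h T)"
      unfolding e tensor_badd hcls[OF fin_add[OF f]] hcls[OF f(1)] hcls[OF f(2)] lin_add[OF f] mod_simps by (rule refl)
  next
    fix a S assume "S \<in> bcar (tensor X Y)"
    then obtain \<phi> where e: "S = tcls X Y \<phi>" "\<phi> \<in> formal_sums X Y" unfolding car by blast
    have f: "finite (spt \<phi>)" using e formal_fin by auto
    have "lin (\<lambda>p. \<mu> ((\<lambda>(x, y). (lact X a x, y)) p)) \<phi> = lin (\<lambda>p. a * \<mu> p) \<phi>"
      by (rule lin_cong) (use formal_car[OF e(2)] mL in \<open>auto split: prod.splits\<close>)
    then show "h (lact (tensor X Y) a S) = lact (modulation id) a (h S)"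
      unfolding e tensor_lact[OF bX f] using f by (simp add: hcls push_fin lin_push lin_lmult)
  next
    fix c S assume "S \<in> bcar (tensor X Y)"
    then obtain \<phi> where e: "S = tcls X Y \<phi>" "\<phi> \<in> formal_sums X Y" unfolding car by blast
    have f: "finite (spt \<phi>)" using e formal_fin by auto
    have "lin (\<lambda>p. \<mu> ((\<lambda>(x, y). (x, ract Y y c)) p)) \<phi> = lin (\<lambda>p. \<mu> p * c) \<phi>"
      by (rule lin_cong) (use formal_car[OF e(2)] mR in \<open>auto split: prod.splits\<close>)
    then show "h (ract (tensor X Y) S c) = ract (modulation id) (h S) c"
      unfolding e tensor_ract[OF bY f] using f by (simp add: hcls push_fin lin_push lin_rmult)
  qed
qed


lemma hom_add: "alg_hom iA iB f \<Longrightarrow> f (x + y) = f x + f y" by (simp add: alg_hom_def)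
lemma hom_mult: "alg_hom iA iB f \<Longrightarrow> f (x * y) = f x * f y" by (simp add: alg_hom_def)
lemma hom_one: "alg_hom iA iB f \<Longrightarrow> f 1 = 1" by (simp add: alg_hom_def)
lemma hom_zero: "alg_hom iA iB f \<Longrightarrow> f 0 = (0::'a::ring_1)"
  using hom_add[of iA iB f 0 0] by simp
lemma hom_diff: "alg_hom iA iB f \<Longrightarrow> f (x - y) = f x - (f y :: 'a::ring_1)"
  using hom_add[of iA iB f "x - y" y] by (simp add: algebra_simps)

lemma modulation_bimod:
  assumes kA: "k_algebra iA" and hom: "alg_hom iA iB f"
  shows "is_bimod iA iB (modulation f)"
  using kA hom unfolding is_bimod_def k_algebra_def alg_hom_def
  by (simp add: algebra_simps)

lemma reverse_dir:
  fixes iA :: "'k::comm_ring_1 \<Rightarrow> 'a::ring_1" and iB :: "'k \<Rightarrow> 'b::ring_1" and f :: "'b \<Rightarrow> 'a"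
  assumes kA: "k_algebra iA" and kB: "k_algebra iB" and hom: "alg_hom iA iB f" and bj: "bij f"
  shows "\<exists>Y :: ('b, 'a, 'b) bimod. inverse_of_modulation iA iB f Y"
proof -
  define g where "g = inv f"
  have fg: "f (g a) = a" for a unfolding g_def using bj by (simp add: bij_def surj_f_inv_f)
  have gf: "g (f b) = b" for b unfolding g_def using bj by (simp add: bij_def inv_f_f)
  have gadd: "g (a + a') = g a + g a'" for a a'
    by (metis fg gf hom_add[OF hom])
  have gmult: "g (a * a') = g a * g a'" for a a'
    by (metis fg gf hom_mult[OF hom])
  have g1: "g 1 = 1" by (metis gf hom_one[OF hom])
  have gi: "g (iA c) = iB c" for c using hom gf by (simp add: alg_hom_def) (metis gf)
  define Y :: "('b, 'a, 'b) bimod" where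
    "Y = \<lparr>bcar = UNIV, badd = (+), bzero = 0, bneg = uminus, lact = (\<lambda>b y. b * y), ract = (\<lambda>y a. y * g a)\<rparr>"
  have Ys[simp]: "bcar Y = UNIV" "badd Y = (+)" "lact Y b y = b * y" "ract Y y a = y * g a" for b y a
    by (simp_all add: Y_def)
  have bY: "is_bimod iB iA Y"
    using kB unfolding is_bimod_def k_algebra_def
    by (simp add: Y_def algebra_simps gadd gmult g1 gi)
  have bP: "is_bimod iA iB (modulation f)" by (rule modulation_bimod[OF kA hom])
  have fadd: "f (x + y) = f x + f y" for x y by (rule hom_add[OF hom])
  have fmult: "f (x * y) = f x * f y" for x y by (rule hom_mult[OF hom])
  have f1: "f 1 = 1" by (rule hom_one[OF hom])
  have iso1: "bimod_iso (tensor (modulation f) Y) (modulation (id :: 'a \<Rightarrow> 'a))"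
  proof (rule tensor_iso_ring[OF bP bY, where \<mu> = "\<lambda>(x, y). x * f y" and \<sigma> = "\<lambda>m. m" and yone = 1])
    fix x y
    have "delta (x * f y, 1) - delta (x, y) \<in> tens_rel (modulation f) Y"
      using rel_bal[of x "modulation f" 1 Y y] by simp
    then have "- (delta (x * f y, 1) - delta (x, y)) \<in> tens_rel (modulation f) Y" by (rule rel_uminus)
    then show "delta (x, y) - delta ((\<lambda>(x, y). x * f y) (x, y), 1) \<in> tens_rel (modulation f) Y" by simp
  qed (simp_all add: algebra_simps fadd fmult fg f1)
  have iso2: "bimod_iso (tensor Y (modulation f)) (modulation (id :: 'b \<Rightarrow> 'b))"
  proof (rule tensor_iso_ring[OF bY bP, where \<mu> = "\<lambda>(y, x). y * g x" and \<sigma> = "\<lambda>m. m" and yone = 1])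
    fix y x
    have "delta (y * g x, 1) - delta (y, x) \<in> tens_rel Y (modulation f)"
      using rel_bal[of y Y 1 "modulation f" x] by simp
    then have "- (delta (y * g x, 1) - delta (y, x)) \<in> tens_rel Y (modulation f)" by (rule rel_uminus)
    then show "delta (y, x) - delta ((\<lambda>(y, x). y * g x) (y, x), 1) \<in> tens_rel Y (modulation f)" by simp
  qed (simp_all add: algebra_simps gadd gmult gf g1)
  show ?thesis unfolding inverse_of_modulation_def using bY iso1 iso2 by blast
qed


lemma iso_zero:
  fixes h :: "_ \<Rightarrow> 'r::ring_1"
  assumes "\<forall>S\<in>bcar (tensor X Y). \<forall>T\<in>bcar (tensor X Y). h (badd (tensor X Y) S T) = h S + h T"
  shows "h (tcls X Y 0) = 0"
proof -
  have z: "0 \<in> formal_sums X Y" by (simp add: formal_sums_def)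
  have c: "tcls X Y 0 \<in> bcar (tensor X Y)" using z by (simp add: tensor_carrier)
  have "h (tcls X Y 0) = h (tcls X Y 0) + h (tcls X Y 0)"
    using assms c tensor_badd[of X Y 0 0] by (metis add_0)
  then show ?thesis by simp
qed

lemma push_formal:
  assumes "\<phi> \<in> formal_sums X Y"
    and "\<And>x y. x \<in> bcar X \<Longrightarrow> y \<in> bcar Y \<Longrightarrow> fst (g (x, y)) \<in> bcar X \<and> snd (g (x, y)) \<in> bcar Y"
  shows "push g \<phi> \<in> formal_sums X Y"
proof -
  have "finite (spt (push g \<phi>))" using push_fin formal_fin[OF assms(1)] by blast
  moreover have "p \<in> bcar X \<times> bcar Y" if "push g \<phi> p \<noteq> 0" for p
  proof -
    have "p \<in> g ` spt \<phi>" using push_spt[of g \<phi>] that by auto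
    then obtain q where q: "q \<in> spt \<phi>" "p = g q" by (rule imageE) blast
    obtain x y where "q = (x, y)" by force
    then show ?thesis using formal_car[OF assms(1), of q] q assms(2)[of x y] by (simp add: mem_Times_iff)
  qed
  ultimately show ?thesis unfolding formal_sums_def by blast
qed

lemma delta_zero_rel:
  fixes f :: "'b \<Rightarrow> 'a::ring_1" and Y :: "('c, 'a, 'y) bimod"
  assumes "y \<in> bcar Y" shows "delta (y, 0) \<in> tens_rel Y (modulation f)"
proof -
  have r: "delta (y, 0 + 0) - delta (y, 0) - delta (y, 0) \<in> tens_rel Y (modulation f)"
    using rel_addr[of y Y 0 "modulation f" 0] assms by simp
  have e: "delta (y, 0 + 0) - delta (y, 0) - delta (y, 0) = - delta (y, (0::'a))" by simp
  from r have "- delta (y, 0) \<in> tens_rel Y (modulation f)" unfolding e .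
  then have "- (- delta (y, 0)) \<in> tens_rel Y (modulation f)" by (rule rel_uminus)
  then show ?thesis by simp
qed

lemma forward_dir:
  fixes iA :: "'k::comm_ring_1 \<Rightarrow> 'a::ring_1" and iB :: "'k \<Rightarrow> 'b::ring_1" and f :: "'b \<Rightarrow> 'a"
    and Y :: "('b, 'a, 'y) bimod"
  assumes kA: "k_algebra iA" and kB: "k_algebra iB" and hom: "alg_hom iA iB f"
    and inv: "inverse_of_modulation iA iB f Y"
  shows "bij f"
proof -
  have bY: "is_bimod iB iA Y" using inv by (simp add: inverse_of_modulation_def)
  have bP: "is_bimod iA iB (modulation f)" by (rule modulation_bimod[OF kA hom])
  obtain h1 where h1bij: "bij_betw h1 (bcar (tensor (modulation f) Y)) UNIV"
    and h1add: "\<forall>S\<in>bcar (tensor (modulation f) Y). \<forall>T\<in>bcar (tensor (modulation f) Y).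
        h1 (badd (tensor (modulation f) Y) S T) = h1 S + h1 T"
    and h1l: "\<forall>a. \<forall>S\<in>bcar (tensor (modulation f) Y). h1 (lact (tensor (modulation f) Y) a S) = a * h1 S"
    and h1r: "\<forall>c. \<forall>S\<in>bcar (tensor (modulation f) Y). h1 (ract (tensor (modulation f) Y) S c) = h1 S * c"
    using inv unfolding inverse_of_modulation_def bimod_iso_def by auto
  obtain h2 where h2bij: "bij_betw h2 (bcar (tensor Y (modulation f))) UNIV"
    and h2add: "\<forall>S\<in>bcar (tensor Y (modulation f)). \<forall>T\<in>bcar (tensor Y (modulation f)).
        h2 (badd (tensor Y (modulation f)) S T) = h2 S + h2 T"
    and h2l: "\<forall>a. \<forall>S\<in>bcar (tensor Y (modulation f)). h2 (lact (tensor Y (modulation f)) a S) = a * h2 S"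
    and h2r: "\<forall>c. \<forall>S\<in>bcar (tensor Y (modulation f)). h2 (ract (tensor Y (modulation f)) S c) = h2 S * c"
    using inv unfolding inverse_of_modulation_def bimod_iso_def by auto
  have car1: "bcar (tensor (modulation f) Y) = tcls (modulation f) Y ` formal_sums (modulation f) Y"
    by (rule tensor_carrier)
  have car2: "bcar (tensor Y (modulation f)) = tcls Y (modulation f) ` formal_sums Y (modulation f)"
    by (rule tensor_carrier)
  have h1inj: "inj_on h1 (bcar (tensor (modulation f) Y))" using h1bij by (simp add: bij_betw_def)
  have h2inj: "inj_on h2 (bcar (tensor Y (modulation f)))" using h2bij by (simp add: bij_betw_def)
  obtain t0 where t0: "t0 \<in> bcar (tensor Y (modulation f))" "h2 t0 = 1"
    using h2bij by (metis UNIV_I bij_betw_def imageE)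
  then obtain \<phi>0 where \<phi>0: "t0 = tcls Y (modulation f) \<phi>0" "\<phi>0 \<in> formal_sums Y (modulation f)"
    unfolding car2 by blast
  have f0: "finite (spt \<phi>0)" by (rule formal_fin[OF \<phi>0(2)])
  have h2z: "h2 (tcls Y (modulation f) 0) = 0" by (rule iso_zero[OF h2add])
  have h1z: "h1 (tcls (modulation f) Y 0) = 0" by (rule iso_zero[OF h1add])

  have ker: "b = 0" if fb: "f b = 0" for b
  proof -
    let ?g = "\<lambda>(y, x). (y, ract (modulation f) x b)"
    have pr: "push ?g \<phi>0 \<in> tens_rel Y (modulation f)"
    proof (rule fs_induct[OF f0, where Q = "\<lambda>\<phi>. push ?g \<phi> \<in> tens_rel Y (modulation f)"])
      show "push ?g 0 \<in> tens_rel Y (modulation f)" using rel_zero by simp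
    next
      fix \<phi> p assume a: "spt \<phi> \<subseteq> spt \<phi>0" "p \<in> spt \<phi>0" "push ?g \<phi> \<in> tens_rel Y (modulation f)"
      have fc: "finite (spt \<phi>)" using a(1) f0 finite_subset by blast
      obtain y x where p: "p = (y, x)" by force
      have y: "y \<in> bcar Y" using formal_car[OF \<phi>0(2), of p] a(2) p by auto
      have d: "delta (?g p) \<in> tens_rel Y (modulation f)" using delta_zero_rel[OF y, of f] p fb by simp
      show "push ?g (\<phi> + delta p) \<in> tens_rel Y (modulation f)"
        unfolding push_add[OF fc finite_delta_spt] push_delta by (rule rel_add[OF a(3) d])
      show "push ?g (\<phi> - delta p) \<in> tens_rel Y (modulation f)"
        unfolding push_diff[OF fc finite_delta_spt] push_delta by (rule rel_diff[OF a(3) d])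
    qed
    have "ract (tensor Y (modulation f)) t0 b = tcls Y (modulation f) (push ?g \<phi>0)"
      unfolding \<phi>0(1) by (rule tensor_ract[OF bP f0])
    also have "\<dots> = tcls Y (modulation f) 0" unfolding tcls_eq using pr by simp
    finally have "h2 (ract (tensor Y (modulation f)) t0 b) = 0" using h2z by simp
    then show "b = 0" using h2r t0 by simp
  qed
  have injf: "inj f"
  proof (rule injI)
    fix x y assume "f x = f y"
    then have "f (x - y) = 0" by (simp add: hom_diff[OF hom])
    then have "x - y = 0" by (rule ker)
    then show "x = y" by simp
  qed

  define k where "k y = h1 (tcls (modulation f) Y (delta (1, y)))" for y
  have c1: "tcls (modulation f) Y (delta (x, y)) \<in> bcar (tensor (modulation f) Y)" if "y \<in> bcar Y" for x y
    unfolding car1 using formal_delta[of x "modulation f" y Y] that by simp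
  have c2: "tcls Y (modulation f) (delta (y, x)) \<in> bcar (tensor Y (modulation f))" if "y \<in> bcar Y" for x y
    unfolding car2 using formal_delta[of y Y x "modulation f"] that by simp
  have Yadd: "badd Y y y' \<in> bcar Y" if "y \<in> bcar Y" "y' \<in> bcar Y" for y y'
    using bY that unfolding is_bimod_def by auto
  have Yr: "ract Y y a \<in> bcar Y" if "y \<in> bcar Y" for y a
    using bY that unfolding is_bimod_def by auto
  have Yl: "lact Y b y \<in> bcar Y" if "y \<in> bcar Y" for y b
    using bY that unfolding is_bimod_def by auto
  have kadd: "k (badd Y y y') = k y + k y'" if y: "y \<in> bcar Y" "y' \<in> bcar Y" for y y'
  proof -
    have "delta (1, badd Y y y') - (delta (1, y) + delta (1, y')) = delta (1, badd Y y y') - delta (1, y) - delta (1, y')"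
      by (simp add: algebra_simps)
    note eq = this
    have r: "delta (1, badd Y y y') - delta (1, y) - delta (1, y') \<in> tens_rel (modulation f) Y"
      using rel_addr[of 1 "modulation f" y Y y'] y by simp
    have "tcls (modulation f) Y (delta (1, badd Y y y')) = tcls (modulation f) Y (delta (1, y) + delta (1, y'))"
      unfolding tcls_eq eq by (rule r)
    also have "\<dots> = badd (tensor (modulation f) Y) (tcls (modulation f) Y (delta (1, y))) (tcls (modulation f) Y (delta (1, y')))"
      by (simp add: tensor_badd)
    finally show ?thesis unfolding k_def using h1add c1 y by simp
  qed
  have kr: "k (ract Y y a) = k y * a" if y: "y \<in> bcar Y" for y a
  proof -
    have "ract (tensor (modulation f) Y) (tcls (modulation f) Y (delta (1, y))) a = tcls (modulation f) Y (delta (1, ract Y y a))"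
      by (simp add: tensor_ract[OF bY finite_delta_spt])
    then show ?thesis unfolding k_def using h1r c1[OF y] by metis
  qed
  have kx: "h1 (tcls (modulation f) Y (delta (x, y))) = x * k y" if y: "y \<in> bcar Y" for x y
  proof -
    have "lact (tensor (modulation f) Y) x (tcls (modulation f) Y (delta (1, y))) = tcls (modulation f) Y (delta (x, y))"
      by (simp add: tensor_lact[OF bP finite_delta_spt])
    then show ?thesis unfolding k_def using h1l c1[OF y] by metis
  qed
  define \<mu>1 where "\<mu>1 = (\<lambda>(x, y). x * k y)"
  have H: "h1 (tcls (modulation f) Y \<psi>) = lin \<mu>1 \<psi>" if \<psi>f: "\<psi> \<in> formal_sums (modulation f) Y" for \<psi>
  proof (rule fs_induct[OF formal_fin[OF \<psi>f], where Q = "\<lambda>\<phi>. h1 (tcls (modulation f) Y \<phi>) = lin \<mu>1 \<phi>"])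
    show "h1 (tcls (modulation f) Y 0) = lin \<mu>1 0" using h1z by simp
  next
    fix \<phi> p assume a: "spt \<phi> \<subseteq> spt \<psi>" "p \<in> spt \<psi>" "h1 (tcls (modulation f) Y \<phi>) = lin \<mu>1 \<phi>"
    have \<phi>f: "\<phi> \<in> formal_sums (modulation f) Y" by (rule formal_sub[OF \<psi>f a(1)])
    have fc: "finite (spt \<phi>)" by (rule formal_fin[OF \<phi>f])
    obtain x y where p: "p = (x, y)" by force
    have y: "y \<in> bcar Y" using formal_car[OF \<psi>f, of p] a(2) p by auto
    have c\<phi>: "tcls (modulation f) Y \<phi> \<in> bcar (tensor (modulation f) Y)" unfolding car1 using \<phi>f by blast
    have hp: "h1 (tcls (modulation f) Y (delta p)) = \<mu>1 p" unfolding p \<mu>1_def using kx[OF y] by simp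
    have "tcls (modulation f) Y (\<phi> + delta p) = badd (tensor (modulation f) Y) (tcls (modulation f) Y \<phi>) (tcls (modulation f) Y (delta p))"
      by (rule tensor_badd[symmetric])
    then have "h1 (tcls (modulation f) Y (\<phi> + delta p)) = h1 (tcls (modulation f) Y \<phi>) + h1 (tcls (modulation f) Y (delta p))"
      using h1add c\<phi> c1[OF y] p by simp
    then show "h1 (tcls (modulation f) Y (\<phi> + delta p)) = lin \<mu>1 (\<phi> + delta p)"
      using a(3) hp lin_add[OF fc finite_delta_spt, of \<mu>1 p] by simp
    have \<phi>'f: "\<phi> - delta p \<in> formal_sums (modulation f) Y"
      by (rule formal_sub[OF \<psi>f]) (use a in \<open>auto simp: delta_def split: if_splits\<close>)
    have c': "tcls (modulation f) Y (\<phi> - delta p) \<in> bcar (tensor (modulation f) Y)" unfolding car1 using \<phi>'f by blast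
    have "tcls (modulation f) Y \<phi> = badd (tensor (modulation f) Y) (tcls (modulation f) Y (\<phi> - delta p)) (tcls (modulation f) Y (delta p))"
      using tensor_badd[of "modulation f" Y "\<phi> - delta p" "delta p"] by simp
    then have "h1 (tcls (modulation f) Y \<phi>) = h1 (tcls (modulation f) Y (\<phi> - delta p)) + h1 (tcls (modulation f) Y (delta p))"
      using h1add c' c1[OF y] p by simp
    then show "h1 (tcls (modulation f) Y (\<phi> - delta p)) = lin \<mu>1 (\<phi> - delta p)"
      using a(3) hp lin_diff[OF fc finite_delta_spt, of \<mu>1 p] by (simp add: eq_diff_eq)
  qed
  obtain t1 where t1: "t1 \<in> bcar (tensor (modulation f) Y)" "h1 t1 = 1"
    using h1bij by (metis UNIV_I bij_betw_def imageE)
  then obtain \<psi>1 where \<psi>1: "t1 = tcls (modulation f) Y \<psi>1" "\<psi>1 \<in> formal_sums (modulation f) Y"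
    unfolding car1 by blast
  have lin1: "lin \<mu>1 \<psi>1 = 1" using H[OF \<psi>1(2)] t1(2) \<psi>1(1) by simp

  have surjf: "\<exists>b. a = f b" for a
  proof -
    define Ra where "Ra = (\<lambda>(y::'y, x::'a). (y, x * a))"
    define \<psi>a where "\<psi>a = push Ra \<phi>0"
    have \<psi>af: "\<psi>a \<in> formal_sums Y (modulation f)" unfolding \<psi>a_def Ra_def
      by (rule push_formal[OF \<phi>0(2)]) auto
    have \<psi>afin: "finite (spt \<psi>a)" by (rule formal_fin[OF \<psi>af])
    define b where "b = h2 (tcls Y (modulation f) \<psi>a)"
    have ta: "tcls Y (modulation f) \<psi>a \<in> bcar (tensor Y (modulation f))" unfolding car2 using \<psi>af by blast
    have pushRa_rel: "push Ra r \<in> tens_rel Y (modulation f)" if "r \<in> tens_rel Y (modulation f)" for r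
      unfolding Ra_def
      by (rule push_rel[where gx = "\<lambda>y. y" and gy = "\<lambda>x. x * a", OF _ _ _ _ _ _ that])
         (simp_all add: algebra_simps)
    have K: "k y * (a - f b) = 0" if y: "y \<in> bcar Y" for y
    proof -
      define \<beta> where "\<beta> = h2 (tcls Y (modulation f) (delta (y, 1)))"
      define Lb where "Lb = (\<lambda>(y'::'y, x::'a). (lact Y \<beta> y', x))"
      have pLf: "push Lb \<phi>0 \<in> formal_sums Y (modulation f)" unfolding Lb_def
        by (rule push_formal[OF \<phi>0(2)]) (use Yl in auto)
      have cL: "tcls Y (modulation f) (push Lb \<phi>0) \<in> bcar (tensor Y (modulation f))" unfolding car2 using pLf by blast
      have "lact (tensor Y (modulation f)) \<beta> t0 = tcls Y (modulation f) (push Lb \<phi>0)"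
        unfolding \<phi>0(1) Lb_def by (rule tensor_lact[OF bY f0])
      then have "h2 (tcls Y (modulation f) (push Lb \<phi>0)) = h2 (tcls Y (modulation f) (delta (y, 1)))"
        using h2l t0 unfolding \<beta>_def by (metis mult.right_neutral)
      then have "tcls Y (modulation f) (push Lb \<phi>0) = tcls Y (modulation f) (delta (y, 1))"
        by (rule inj_onD[OF h2inj _ cL c2[OF y]])
      then have r1: "push Lb \<phi>0 - delta (y, 1) \<in> tens_rel Y (modulation f)" unfolding tcls_eq .
      have comm: "Ra \<circ> Lb = Lb \<circ> Ra" by (auto simp: Ra_def Lb_def fun_eq_iff)
      have "push Ra (push Lb \<phi>0 - delta (y, 1)) = push Ra (push Lb \<phi>0) - delta (Ra (y, 1))"
        by (simp only: push_diff[OF push_fin[OF f0] finite_delta_spt] push_delta)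
      also have "push Ra (push Lb \<phi>0) = push Lb \<psi>a"
        unfolding \<psi>a_def push_comp[OF f0] comm ..
      also have "Ra (y, 1) = (y, a)" by (simp add: Ra_def)
      finally have eq: "push Ra (push Lb \<phi>0 - delta (y, 1)) = push Lb \<psi>a - delta (y, a)" .
      have r2: "push Lb \<psi>a - delta (y, a) \<in> tens_rel Y (modulation f)"
        using pushRa_rel[OF r1] unfolding eq .
      have "lact (tensor Y (modulation f)) \<beta> (tcls Y (modulation f) \<psi>a) = tcls Y (modulation f) (push Lb \<psi>a)"
        unfolding Lb_def by (rule tensor_lact[OF bY \<psi>afin])
      also have "\<dots> = tcls Y (modulation f) (delta (y, a))" unfolding tcls_eq by (rule r2)
      finally have e1: "h2 (tcls Y (modulation f) (delta (y, a))) = \<beta> * b"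
        using h2l ta unfolding b_def by metis
      have "ract (tensor Y (modulation f)) (tcls Y (modulation f) (delta (y, 1))) b = tcls Y (modulation f) (delta (y, f b))"
        by (simp add: tensor_ract[OF bP finite_delta_spt])
      then have e2: "h2 (tcls Y (modulation f) (delta (y, f b))) = \<beta> * b"
        using h2r c2[OF y] unfolding \<beta>_def by metis
      have "tcls Y (modulation f) (delta (y, a)) = tcls Y (modulation f) (delta (y, f b))"
        by (rule inj_onD[OF h2inj _ c2[OF y] c2[OF y]]) (simp add: e1 e2)
      then have r3: "delta (y, a) - delta (y, f b) \<in> tens_rel Y (modulation f)" unfolding tcls_eq .
      have "lin (\<lambda>(y, x). k y * x) (delta (y, a) - delta (y, f b)) = 0"
      proof (rule lin_rel[OF _ _ _ r3])
        fix y y' x assume "y \<in> bcar Y" "y' \<in> bcar Y"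
        then show "(\<lambda>(y, x). k y * x) (badd Y y y', x) = (\<lambda>(y, x). k y * x) (y, x) + (\<lambda>(y, x). k y * x) (y', x)"
          by (simp add: kadd algebra_simps)
      next
        fix y x x' show "(\<lambda>(y, x). k y * x) (y, badd (modulation f) x x') = (\<lambda>(y, x). k y * x) (y, x) + (\<lambda>(y, x). k y * x) (y, x')"
          by (simp add: algebra_simps)
      next
        fix y x a' assume "y \<in> bcar Y"
        then show "(\<lambda>(y, x). k y * x) (ract Y y a', x) = (\<lambda>(y, x). k y * x) (y, lact (modulation f) a' x)"
          by (simp add: kr mult.assoc)
      qed
      then show ?thesis by (simp add: lin_d2 right_diff_distrib)
    qed
    have "a - f b = lin \<mu>1 \<psi>1 * (a - f b)" using lin1 by simp
    also have "\<dots> = lin (\<lambda>p. \<mu>1 p * (a - f b)) \<psi>1" by (simp add: lin_rmult)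
    also have "\<dots> = lin (\<lambda>p. 0) \<psi>1"
    proof (rule lin_cong)
      fix p assume "\<psi>1 p \<noteq> 0"
      then have "snd p \<in> bcar Y" using formal_car[OF \<psi>1(2)] by blast
      then show "\<mu>1 p * (a - f b) = 0" using K by (cases p) (simp add: \<mu>1_def mult.assoc)
    qed
    also have "\<dots> = 0" by (simp add: lin_def)
    finally show ?thesis by auto
  qed
  show "bij f" unfolding bij_def using injf surjf by (metis surj_def)
qed

theorem lemma2p3:
  fixes iA :: "'k::comm_ring_1 \<Rightarrow> 'a::ring_1" and iB :: "'k \<Rightarrow> 'b::ring_1"
    and f :: "'b \<Rightarrow> 'a"
  assumes "k_algebra iA" and "k_algebra iB" and "alg_hom iA iB f"
  shows "((\<exists>Y :: ('b, 'a, 'y) bimod. inverse_of_modulation iA iB f Y) \<longrightarrow> alg_iso iA iB f) \<and>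
         (alg_iso iA iB f \<longrightarrow> (\<exists>Y :: ('b, 'a, 'b) bimod. inverse_of_modulation iA iB f Y))"
proof (intro conjI impI)
  assume "\<exists>Y :: ('b, 'a, 'y) bimod. inverse_of_modulation iA iB f Y"
  then obtain Y :: "('b, 'a, 'y) bimod" where "inverse_of_modulation iA iB f Y" by blast
  then have "bij f" by (rule forward_dir[OF assms])
  then show "alg_iso iA iB f" using assms(3) by (simp add: alg_iso_def)
next
  assume "alg_iso iA iB f"
  then have "bij f" by (simp add: alg_iso_def)
  then show "\<exists>Y :: ('b, 'a, 'b) bimod. inverse_of_modulation iA iB f Y"
    by (rule reverse_dir[OF assms])
qed

end
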